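(* For every integer $n\ge3$, let $\mathcal{S}_n$ be the regular $n$-gon state space. Then $\lambda_{max}(\mathcal{S}_n)=2$ when $n$ is even and $\lambda_{max}(\mathcal{S}_n)=1+\sec(\pi/n)>2$ when $n$ is odd.
   Context: The regular $n$-gon state space $\mathcal{S}_n\subset\mathbb{R}^3$ is the convex hull of the points $s_j=(r_n\cos(2j\pi/n),\,r_n\sin(2j\pi/n),\,1)^T$, $j=1,\ldots,n$, where $r_n=\sqrt{\sec(\pi/n)}$. Effects are linear functionals $e$ on $\mathbb{R}^3$ with $0\le e(s)\le1$ for all $s\in\mathcal{S}_n$; the unit effect is $u=(0,0,1)$ (acting by the dot product). For a linear functional $f$, $\|f\|=\max_{s\in\mathcal{S}_n}|f(s)|$. A measurement with finite outcome set $\Omega$ is a map $x\mapsto\mathsf{M}_x$ to effects with $\sum_x\mathsf{M}_x=u$; its decoding power is $\lambda_{max}(\mathsf{M})=\sum_x\|\mathsf{M}_x\|$, and the information storability $\lambda_{max}(\mathcal{S}_n)$ is the supremum of $\lambda_{max}(\mathsf{M})$ over all such measurements. *)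

theory Defs
  imports "HOL-Analysis.Analysis"
begin

text \<open>Regular n-gon state space in R^3. Effects/functionals are represented by
  vectors in R^3 acting via the inner (dot) product.\<close>

definition ngon_r :: "nat \<Rightarrow> real" where
  "ngon_r n = sqrt (1 / cos (pi / real n))"

definition ngon_vertex :: "nat \<Rightarrow> nat \<Rightarrow> real^3" where
  "ngon_vertex n j = vector [ngon_r n * cos (2 * real j * pi / real n),
                             ngon_r n * sin (2 * real j * pi / real n), 1]"

definition ngon_states :: "nat \<Rightarrow> (real^3) set" where
  "ngon_states n = convex hull (ngon_vertex n ` {1..n})"

definition unit_effect :: "real^3" where
  "unit_effect = vector [0, 0, 1]"

definition is_effect :: "nat \<Rightarrow> real^3 \<Rightarrow> bool" where
  "is_effect n e \<longleftrightarrow> (\<forall>s\<in>ngon_states n. 0 \<le> e \<bullet> s \<and> e \<bullet> s \<le> 1)"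

definition fnorm :: "nat \<Rightarrow> real^3 \<Rightarrow> real" where
  "fnorm n f = (SUP s\<in>ngon_states n. \<bar>f \<bullet> s\<bar>)"

definition is_measurement :: "nat \<Rightarrow> nat set \<Rightarrow> (nat \<Rightarrow> real^3) \<Rightarrow> bool" where
  "is_measurement n \<Omega> M \<longleftrightarrow> finite \<Omega> \<and> (\<forall>x\<in>\<Omega>. is_effect n (M x)) \<and> (\<Sum>x\<in>\<Omega>. M x) = unit_effect"

definition decoding_power :: "nat \<Rightarrow> nat set \<Rightarrow> (nat \<Rightarrow> real^3) \<Rightarrow> real" where
  "decoding_power n \<Omega> M = (\<Sum>x\<in>\<Omega>. fnorm n (M x))"

definition storability :: "nat \<Rightarrow> real" where
  "storability n = (SUP (\<Omega>, M)\<in>{(\<Omega>, M). is_measurement n \<Omega> M}. decoding_power n \<Omega> M)"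

end

theory Submission
  imports Defs
begin

lemma inner_vertex:
  "vector [a, b, c] \<bullet> ngon_vertex n j =
     ngon_r n * (a * cos (2 * real j * pi / real n) + b * sin (2 * real j * pi / real n)) + c"
  by (simp add: ngon_vertex_def inner_vec_def sum_3 algebra_simps)

lemma inner_unit: "unit_effect \<bullet> c = c $ 3"
  by (simp add: unit_effect_def inner_vec_def sum_3)

lemma vertex_in: "j \<in> {1..n} \<Longrightarrow> ngon_vertex n j \<in> ngon_states n"
  unfolding ngon_states_def by (rule hull_inc) auto

lemma states_ne: "n \<ge> 1 \<Longrightarrow> ngon_states n \<noteq> {}"
  using vertex_in[of 1 n] by auto

lemma vertex_plus_n: "n > 0 \<Longrightarrow> ngon_vertex n (j + n) = ngon_vertex n j"
proof -
  assume n: "n > 0"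
  have "2 * real (j + n) * pi / real n = 2 * real j * pi / real n + 2 * pi"
    using n by (simp add: field_simps)
  then show ?thesis unfolding ngon_vertex_def by simp
qed

lemma vertex_mod: "n > 0 \<Longrightarrow> ngon_vertex n j = ngon_vertex n (j mod n)"
proof (induction j rule: nat_less_induct)
  case (1 j)
  show ?case
  proof (cases "j < n")
    case True then show ?thesis by simp
  next
    case False
    then obtain i where i: "j = i + n" by (metis add.commute le_Suc_ex not_less)
    have "i < j" using i 1(2) by simp
    then have "ngon_vertex n i = ngon_vertex n (i mod n)" using 1 by blast
    then show ?thesis using i vertex_plus_n[OF 1(2)] by simp
  qed
qed

lemma vertex_any: "n > 0 \<Longrightarrow> ngon_vertex n j \<in> ngon_states n"
proof -
  assume n: "n > 0"
  show ?thesis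
  proof (cases "j mod n = 0")
    case True
    have "ngon_vertex n j = ngon_vertex n 0" using vertex_mod[OF n, of j] True by simp
    also have "\<dots> = ngon_vertex n n" using vertex_plus_n[OF n, of 0] by simp
    finally show ?thesis using vertex_in[of n n] n by simp
  next
    case False
    then have "j mod n \<in> {1..n}" using n by (simp add: Suc_leI order.strict_implies_order)
    then show ?thesis using vertex_mod[OF n, of j] vertex_in by metis
  qed
qed

lemma effect_from_vertices:
  assumes "\<And>j. j \<in> {1..n} \<Longrightarrow> 0 \<le> e \<bullet> ngon_vertex n j \<and> e \<bullet> ngon_vertex n j \<le> 1"
  shows "is_effect n e"
proof -
  have "ngon_states n \<subseteq> {s. e \<bullet> s \<ge> 0} \<inter> {s. e \<bullet> s \<le> 1}"
    unfolding ngon_states_def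
    by (rule hull_minimal) (use assms in \<open>auto intro: convex_Int convex_halfspace_le convex_halfspace_ge\<close>)
  then show ?thesis unfolding is_effect_def by auto
qed

lemma fnorm_le1: "n \<ge> 1 \<Longrightarrow> is_effect n e \<Longrightarrow> fnorm n e \<le> 1"
  unfolding fnorm_def is_effect_def
  by (rule cSUP_least) (auto simp: states_ne)

lemma fnorm_ge: "is_effect n e \<Longrightarrow> s \<in> ngon_states n \<Longrightarrow> e \<bullet> s \<le> fnorm n e"
  unfolding fnorm_def
proof -
  assume e: "is_effect n e" and s: "s \<in> ngon_states n"
  have "bdd_above ((\<lambda>s. \<bar>e \<bullet> s\<bar>) ` ngon_states n)"
    using e unfolding is_effect_def by (intro bdd_aboveI2[where M=1]) auto
  then have "\<bar>e \<bullet> s\<bar> \<le> (SUP s\<in>ngon_states n. \<bar>e \<bullet> s\<bar>)"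
    using s by (rule cSUP_upper2) simp
  then show "e \<bullet> s \<le> (SUP s\<in>ngon_states n. \<bar>e \<bullet> s\<bar>)" by simp
qed

lemma decoding_le:
  assumes n: "n \<ge> 1"
    and c: "\<And>e j. is_effect n e \<Longrightarrow> j \<in> {1..n} \<Longrightarrow> e \<bullet> ngon_vertex n j \<le> e \<bullet> c"
    and M: "is_measurement n \<Omega> M"
  shows "decoding_power n \<Omega> M \<le> c $ 3"
proof -
  have fin: "finite \<Omega>" and eff: "\<And>x. x \<in> \<Omega> \<Longrightarrow> is_effect n (M x)"
    and sumM: "(\<Sum>x\<in>\<Omega>. M x) = unit_effect"
    using M unfolding is_measurement_def by auto
  have le: "fnorm n (M x) \<le> M x \<bullet> c" if x: "x \<in> \<Omega>" for x
  proof -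
    have "ngon_states n \<subseteq> {s. M x \<bullet> s \<le> M x \<bullet> c}"
      unfolding ngon_states_def
      by (rule hull_minimal) (use c eff[OF x] in \<open>auto intro: convex_halfspace_le\<close>)
    then show ?thesis
      unfolding fnorm_def using eff[OF x] states_ne[OF n]
      by (intro cSUP_least) (auto simp: is_effect_def)
  qed
  have "decoding_power n \<Omega> M \<le> (\<Sum>x\<in>\<Omega>. M x \<bullet> c)"
    unfolding decoding_power_def by (rule sum_mono) (rule le)
  also have "\<dots> = (\<Sum>x\<in>\<Omega>. M x) \<bullet> c" by (simp add: inner_sum_left)
  also have "\<dots> = c $ 3" using sumM inner_unit by simp
  finally show ?thesis .
qed

lemma stor_eq:
  assumes "\<And>\<Omega> M. is_measurement n \<Omega> M \<Longrightarrow> decoding_power n \<Omega> M \<le> B"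
    and "is_measurement n \<Omega>0 M0" and "decoding_power n \<Omega>0 M0 = B"
  shows "storability n = B"
  unfolding storability_def
  by (rule cSup_eq_maximum) (use assms in \<open>force+\<close>)

lemma cos_ge_odd:
  assumes n: "odd n" "n \<ge> 3" and d: "d < n"
  shows "- cos (pi / real n) \<le> cos (2 * real d * pi / real n)"
proof -
  have npos: "real n > 0" using n by simp
  have eq: "- cos (pi / real n) = cos (pi - pi / real n)" by simp
  have key: "- cos (pi / real n) \<le> cos (2 * real e * pi / real n)" if e: "2 * e + 1 \<le> n" for e :: nat
  proof -
    have "2 * real e * pi / real n \<le> pi - pi / real n"
    proof -
      have "real (2 * e + 1) \<le> real n" using e by linarith
      then have "(2 * real e + 1) * pi \<le> real n * pi" by (intro mult_right_mono) auto
      then show ?thesis using npos by (simp add: field_simps)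
    qed
    moreover have "pi - pi / real n \<le> pi" using npos by simp
    ultimately show ?thesis unfolding eq
      by (intro cos_monotone_0_pi_le) (auto simp: npos)
  qed
  show ?thesis
  proof (cases "2 * d + 1 \<le> n")
    case True then show ?thesis by (rule key)
  next
    case False
    then have e: "2 * (n - d) + 1 \<le> n" using n d by presburger
    have "2 * real d * pi / real n = 2 * pi - 2 * real (n - d) * pi / real n"
      using d npos by (simp add: of_nat_diff field_simps)
    then have "cos (2 * real d * pi / real n) = cos (2 * real (n - d) * pi / real n)"
      by (simp add: cos_diff)
    then show ?thesis using key[OF e] by simp
  qed
qed

lemma telescope: "(\<Sum>k=1..(N::nat). f k - f (k - 1)) = f N - (f 0 :: real)"
  by (induction N) (auto simp: sum.cl_ivl_Suc)

lemma cos_sum_zero: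
  assumes n: "n \<ge> 3"
  shows "(\<Sum>k=1..n. cos (2 * real k * pi / real n)) = 0"
proof -
  define a where "a = pi / real n"
  have npos: "real n > 0" using n by simp
  have sa: "sin a \<noteq> 0"
  proof -
    have "0 < a" "a < pi" using npos n by (auto simp: a_def field_simps)
    then show ?thesis using sin_gt_zero by force
  qed
  define f where "f k = sin ((2 * real k + 1) * a)" for k :: nat
  have "2 * sin a * (\<Sum>k=1..n. cos (2 * real k * pi / real n)) = (\<Sum>k=1..n. f k - f (k - 1))"
    unfolding sum_distrib_left
  proof (rule sum.cong)
    fix k assume k: "k \<in> {1..n}"
    have "2 * real k * pi / real n = 2 * real k * a" by (simp add: a_def)
    moreover have "(2 * real (k - 1) + 1) * a = 2 * real k * a - a" using k by (simp add: of_nat_diff algebra_simps)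
    moreover have "(2 * real k + 1) * a = 2 * real k * a + a" by (simp add: algebra_simps)
    ultimately show "2 * sin a * cos (2 * real k * pi / real n) = f k - f (k - 1)"
      unfolding f_def by (simp add: sin_add sin_diff)
  qed simp
  also have "\<dots> = f n - f 0" by (rule telescope)
  also have "\<dots> = 0"
  proof -
    have "(2 * real n + 1) * a = a + 2 * pi" using npos by (simp add: a_def field_simps)
    then show ?thesis unfolding f_def by simp
  qed
  finally show ?thesis using sa by simp
qed

lemma sin_sum_zero:
  assumes n: "n \<ge> 3"
  shows "(\<Sum>k=1..n. sin (2 * real k * pi / real n)) = 0"
proof -
  define a where "a = pi / real n"
  have npos: "real n > 0" using n by simp
  have sa: "sin a \<noteq> 0"
  proof -
    have "0 < a" "a < pi" using npos n by (auto simp: a_def field_simps)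
    then show ?thesis using sin_gt_zero by force
  qed
  define f where "f k = - cos ((2 * real k + 1) * a)" for k :: nat
  have "2 * sin a * (\<Sum>k=1..n. sin (2 * real k * pi / real n)) = (\<Sum>k=1..n. f k - f (k - 1))"
    unfolding sum_distrib_left
  proof (rule sum.cong)
    fix k assume k: "k \<in> {1..n}"
    have "2 * real k * pi / real n = 2 * real k * a" by (simp add: a_def)
    moreover have "(2 * real (k - 1) + 1) * a = 2 * real k * a - a" using k by (simp add: of_nat_diff algebra_simps)
    moreover have "(2 * real k + 1) * a = 2 * real k * a + a" by (simp add: algebra_simps)
    ultimately show "2 * sin a * sin (2 * real k * pi / real n) = f k - f (k - 1)"
      unfolding f_def by (simp add: cos_add cos_diff)
  qed simp
  also have "\<dots> = f n - f 0" by (rule telescope)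
  also have "\<dots> = 0"
  proof -
    have "(2 * real n + 1) * a = a + 2 * pi" using npos by (simp add: a_def field_simps)
    then show ?thesis unfolding f_def by simp
  qed
  finally show ?thesis using sa by simp
qed

lemma C_facts:
  assumes n: "n \<ge> 3"
  shows "cos (pi / real n) \<ge> 1/2" "cos (pi / real n) < 1" "ngon_r n > 0"
proof -
  have npos: "real n \<ge> 3" using n by simp
  have a: "pi / real n \<le> pi / 3" by (intro divide_left_mono) (use npos pi_gt_zero in auto)
  have a0: "0 < pi / real n" using npos by simp
  show c: "cos (pi / real n) \<ge> 1/2"
    using cos_monotone_0_pi_le[of "pi / real n" "pi/3"] a a0 by (simp add: cos_60)
  have "pi / real n < pi" using npos by (simp add: field_simps)
  then have "cos (pi / real n) < cos 0"
    using a0 by (intro cos_monotone_0_pi) auto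
  then show "cos (pi / real n) < 1" by simp
  show "ngon_r n > 0" unfolding ngon_r_def using c by simp
qed

lemma cp1: "0 \<le> 1 + cos (x::real)"
  using cos_ge_minus_one[of x] by linarith

lemma cm1: "0 \<le> 1 - cos (x::real)"
  using cos_le_one[of x] by linarith

lemma bnd1: "0 \<le> (1 + cos x) / 2 \<and> (1 + cos x) / 2 \<le> (1::real)"
  using cp1[of x] cm1[of x] by (auto simp: field_simps)

lemma bnd2: "0 \<le> (1 - cos x) / 2 \<and> (1 - cos x) / 2 \<le> (1::real)"
  using cp1[of x] cm1[of x] by (auto simp: field_simps)

lemma even_case:
  assumes n: "n \<ge> 3" and ev: "even n"
  shows "storability n = 2"
proof -
  obtain m where m: "n = 2 * m" using ev by blast
  have npos: "real n > 0" using n by simp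
  define r where "r = ngon_r n"
  have r: "r > 0" using C_facts[OF n] r_def by simp
  have vm: "ngon_vertex n j + ngon_vertex n (j + m) = vector [0, 0, 2]" for j
  proof -
    have "2 * real (j + m) * pi / real n = 2 * real j * pi / real n + pi"
      using npos m by (simp add: field_simps)
    then show ?thesis unfolding ngon_vertex_def
      by (simp add: vec_eq_iff forall_3)
  qed
  have up: "decoding_power n \<Omega> M \<le> 2" if M: "is_measurement n \<Omega> M" for \<Omega> M
  proof -
    have "decoding_power n \<Omega> M \<le> (vector [0, 0, 2] :: real^3) $ 3"
    proof (rule decoding_le[OF _ _ M])
      show "n \<ge> 1" using n by simp
      fix e j assume e: "is_effect n e" and j: "j \<in> {1..n}"
      have "0 \<le> e \<bullet> ngon_vertex n (j + m)"
        using e vertex_any[of n "j + m"] npos unfolding is_effect_def by auto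
      then show "e \<bullet> ngon_vertex n j \<le> e \<bullet> vector [0, 0, 2]"
        unfolding vm[of j, symmetric] by (simp add: inner_add_right)
    qed
    then show ?thesis by simp
  qed
  define M :: "nat \<Rightarrow> real^3" where
    "M k = (if k = 1 then vector [1/(2*r), 0, 1/2] else vector [-1/(2*r), 0, 1/2])" for k
  have M1: "M 1 \<bullet> ngon_vertex n j = (1 + cos (2 * real j * pi / real n)) / 2" for j
    using r by (simp add: M_def inner_vertex r_def[symmetric] field_simps)
  have M2: "M 2 \<bullet> ngon_vertex n j = (1 - cos (2 * real j * pi / real n)) / 2" for j
    using r by (simp add: M_def inner_vertex r_def[symmetric] field_simps)
  have e1: "is_effect n (M 1)"
    by (rule effect_from_vertices, unfold M1, rule bnd1)
  have e2: "is_effect n (M 2)"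
    by (rule effect_from_vertices, unfold M2, rule bnd2)
  have meas: "is_measurement n {1, 2} M"
    unfolding is_measurement_def using e1 e2
    by (auto simp: M_def unit_effect_def vec_eq_iff forall_3)
  have f1: "fnorm n (M 1) = 1"
  proof (rule antisym)
    show "fnorm n (M 1) \<le> 1" using fnorm_le1 e1 n by simp
    have "M 1 \<bullet> ngon_vertex n n \<le> fnorm n (M 1)"
      using fnorm_ge[OF e1 vertex_any[of n n]] npos by simp
    moreover have "M 1 \<bullet> ngon_vertex n n = 1" unfolding M1 using npos by simp
    ultimately show "1 \<le> fnorm n (M 1)" by linarith
  qed
  have f2: "fnorm n (M 2) = 1"
  proof (rule antisym)
    show "fnorm n (M 2) \<le> 1" using fnorm_le1 e2 n by simp
    have "M 2 \<bullet> ngon_vertex n m \<le> fnorm n (M 2)"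
      using fnorm_ge[OF e2 vertex_any[of n m]] npos by simp
    moreover have "2 * real m * pi / real n = pi" using m npos by simp
    ultimately have "M 2 \<bullet> ngon_vertex n m \<le> fnorm n (M 2)" "M 2 \<bullet> ngon_vertex n m = 1" unfolding M2 by simp_all
    then show "1 \<le> fnorm n (M 2)" by linarith
  qed
  have dp: "decoding_power n {1, 2} M = 2"
    unfolding decoding_power_def using f1 f2 by simp
  show ?thesis by (rule stor_eq[OF up meas dp])
qed

lemma inner_vertex':
  "e \<bullet> ngon_vertex n j =
     ngon_r n * (e $ 1 * cos (2 * real j * pi / real n) + e $ 2 * sin (2 * real j * pi / real n)) + e $ 3"
  by (simp add: ngon_vertex_def inner_vec_def sum_3 algebra_simps)

lemma cos_gap:
  assumes n: "odd n" "n \<ge> 3" and j: "j \<in> {1..n}" and k: "k \<in> {1..n}"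
  shows "- cos (pi / real n) \<le> cos (2 * real j * pi / real n - 2 * real k * pi / real n)"
proof (cases "k \<le> j")
  case True
  have "real n > 0" using n by simp
  have "2 * real j * pi / real n - 2 * real k * pi / real n = 2 * real (j - k) * pi / real n"
    using True \<open>real n > 0\<close> by (simp add: of_nat_diff field_simps)
  moreover have "j - k < n" using j k by auto
  ultimately show ?thesis using cos_ge_odd[OF n] by simp
next
  case False
  have "real n > 0" using n by simp
  have "2 * real j * pi / real n - 2 * real k * pi / real n = - (2 * real (k - j) * pi / real n)"
    using False \<open>real n > 0\<close> by (simp add: of_nat_diff field_simps)
  moreover have "k - j < n" using j k by auto
  ultimately show ?thesis using cos_ge_odd[OF n, of "k - j"] by simp
qed

lemma odd_case:
  assumes n: "n \<ge> 3" and od: "odd n"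
  shows "storability n = 1 + 1 / cos (pi / real n)"
proof -
  obtain m where m: "n = 2 * m + 1" using od oddE by blast
  have npos: "real n > 0" using n by simp
  define r where "r = ngon_r n"
  define C where "C = cos (pi / real n)"
  have r: "r > 0" using C_facts[OF n] r_def by simp
  have C: "C \<ge> 1/2" "C < 1" using C_facts[OF n] C_def by auto
  have Cpos: "C > 0" using C by simp
  define th where "th j = 2 * real j * pi / real n" for j :: nat
  have sums: "cos (th (j + m)) + cos (th (j + m + 1)) = - 2 * C * cos (th j)"
    "sin (th (j + m)) + sin (th (j + m + 1)) = - 2 * C * sin (th j)" for j
  proof -
    have rn: "real n = 2 * real m + 1" using m by simp
    have rp: "2 * real m + 1 > 0" by simp
    have a: "th (j + m) = (th j + pi) - pi / real n"
    proof -
      have "(th j + pi) - pi / real n = (2 * real j * pi + (real n - 1) * pi) / real n"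
        unfolding th_def using npos by (simp add: field_simps)
      also have "real n - 1 = 2 * real m" using rn by simp
      finally show ?thesis unfolding th_def using npos by (simp add: field_simps)
    qed
    have b: "th (j + m + 1) = (th j + pi) + pi / real n"
    proof -
      have "(th j + pi) + pi / real n = (2 * real j * pi + (real n + 1) * pi) / real n"
        unfolding th_def using npos by (simp add: field_simps)
      also have "real n + 1 = 2 * (real m + 1)" using rn by simp
      finally have "(th j + pi) + pi / real n = (2 * real j * pi + 2 * (real m + 1) * pi) / real n" .
      moreover have "th (j + m + 1) = (2 * real j * pi + 2 * (real m + 1) * pi) / real n"
        unfolding th_def by (simp add: algebra_simps)
      ultimately show ?thesis by simp
    qed
    show "cos (th (j + m)) + cos (th (j + m + 1)) = - 2 * C * cos (th j)"
      unfolding a b C_def by (simp add: cos_add cos_diff)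
    show "sin (th (j + m)) + sin (th (j + m + 1)) = - 2 * C * sin (th j)"
      unfolding a b C_def by (simp add: sin_add sin_diff)
  qed
  have up: "decoding_power n \<Omega> M \<le> 1 + 1 / C" if M: "is_measurement n \<Omega> M" for \<Omega> M
  proof -
    have "decoding_power n \<Omega> M \<le> (vector [0, 0, 1 + 1 / C] :: real^3) $ 3"
    proof (rule decoding_le[OF _ _ M])
      show "n \<ge> 1" using n by simp
      fix e j assume e: "is_effect n e" and j: "j \<in> {1..n}"
      have p1: "0 \<le> e \<bullet> ngon_vertex n (j + m)" and p2: "0 \<le> e \<bullet> ngon_vertex n (j + m + 1)"
        using e vertex_any[of n "j + m"] vertex_any[of n "j + m + 1"] npos
        unfolding is_effect_def by auto
      have ec: "e \<bullet> (vector [0, 0, 1 + 1 / C] :: real^3) = e $ 3 * (1 + 1 / C)"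
        by (simp add: inner_vec_def sum_3)
      have "e \<bullet> ngon_vertex n (j + m) + e \<bullet> ngon_vertex n (j + m + 1)
          = r * (e $ 1 * (cos (th (j + m)) + cos (th (j + m + 1))) + e $ 2 * (sin (th (j + m)) + sin (th (j + m + 1)))) + 2 * e $ 3"
        unfolding inner_vertex' th_def r_def by (simp add: algebra_simps)
      also have "\<dots> = 2 * C * (e $ 3 * (1 + 1 / C) - e \<bullet> ngon_vertex n j)"
        unfolding sums inner_vertex' r_def[symmetric] th_def[symmetric] using Cpos
        by (simp add: field_simps)
      finally have "0 \<le> 2 * C * (e $ 3 * (1 + 1 / C) - e \<bullet> ngon_vertex n j)"
        using p1 p2 by linarith
      then have "0 \<le> e $ 3 * (1 + 1 / C) - e \<bullet> ngon_vertex n j"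
        using Cpos by (simp add: zero_le_mult_iff)
      then show "e \<bullet> ngon_vertex n j \<le> e \<bullet> vector [0, 0, 1 + 1 / C]"
        unfolding ec by linarith
    qed
    then show ?thesis by simp
  qed
  define M :: "nat \<Rightarrow> real^3" where
    "M k = vector [cos (th k) / (real n * r * C), sin (th k) / (real n * r * C), 1 / real n]" for k
  have Mv: "M k \<bullet> ngon_vertex n j = (cos (th j - th k) + C) / (real n * C)" for k j
  proof -
    have "M k \<bullet> ngon_vertex n j = r * (cos (th k) / (real n * r * C) * cos (th j) + sin (th k) / (real n * r * C) * sin (th j)) + 1 / real n"
      unfolding M_def inner_vertex r_def th_def by simp
    also have "\<dots> = (cos (th j) * cos (th k) + sin (th j) * sin (th k) + C) / (real n * C)"
      using r Cpos npos by (simp add: field_simps)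
    finally show ?thesis by (simp add: cos_diff)
  qed
  have nC: "1 + C \<le> real n * C"
  proof -
    have "3 * C \<le> real n * C" using n Cpos by (intro mult_right_mono) auto
    then show ?thesis using C by linarith
  qed
  have eff: "is_effect n (M k)" if k: "k \<in> {1..n}" for k
  proof (rule effect_from_vertices)
    fix j assume j: "j \<in> {1..n}"
    have g: "- C \<le> cos (th j - th k)" using cos_gap[OF od n j k] unfolding C_def th_def .
    have h: "cos (th j - th k) \<le> 1" by simp
    have "0 \<le> (cos (th j - th k) + C) / (real n * C)"
      using g Cpos npos by (intro divide_nonneg_pos) auto
    moreover have "(cos (th j - th k) + C) / (real n * C) \<le> 1"
    proof -
      have "cos (th j - th k) + C \<le> real n * C" using h nC by linarith
      then show ?thesis using Cpos npos by (subst divide_le_eq_1_pos) auto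
    qed
    ultimately show "0 \<le> M k \<bullet> ngon_vertex n j \<and> M k \<bullet> ngon_vertex n j \<le> 1"
      unfolding Mv by simp
  qed
  have sumM: "(\<Sum>k\<in>{1..n}. M k) = unit_effect"
  proof -
    have s1: "(\<Sum>k\<in>{1..n}. cos (th k)) = 0" unfolding th_def using cos_sum_zero[OF n] .
    have s2: "(\<Sum>k\<in>{1..n}. sin (th k)) = 0" unfolding th_def using sin_sum_zero[OF n] .
    have "(\<Sum>k\<in>{1..n}. M k) $ 1 = 0"
      using s1 by (simp add: M_def sum_divide_distrib[symmetric])
    moreover have "(\<Sum>k\<in>{1..n}. M k) $ 2 = 0"
      using s2 by (simp add: M_def sum_divide_distrib[symmetric])
    moreover have "(\<Sum>k\<in>{1..n}. M k) $ 3 = 1"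
      using npos by (simp add: M_def)
    ultimately show ?thesis
      by (simp add: unit_effect_def vec_eq_iff forall_3)
  qed
  have meas: "is_measurement n {1..n} M"
    unfolding is_measurement_def using eff sumM by auto
  have fk: "(1 + C) / (real n * C) \<le> fnorm n (M k)" if k: "k \<in> {1..n}" for k
  proof -
    have "M k \<bullet> ngon_vertex n k \<le> fnorm n (M k)"
      using fnorm_ge[OF eff[OF k] vertex_in[OF k]] .
    then show ?thesis unfolding Mv by simp
  qed
  have "(\<Sum>k\<in>{1..n}. (1 + C) / (real n * C)) \<le> decoding_power n {1..n} M"
    unfolding decoding_power_def by (rule sum_mono) (rule fk)
  moreover have "(\<Sum>k\<in>{1..n}. (1 + C) / (real n * C)) = 1 + 1 / C"
    using npos Cpos by (simp add: field_simps)
  ultimately have "1 + 1 / C \<le> decoding_power n {1..n} M" by simp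
  then have dp: "decoding_power n {1..n} M = 1 + 1 / C"
    using up[OF meas] by simp
  show ?thesis unfolding C_def[symmetric] by (rule stor_eq[OF up meas dp])
qed

theorem corollary3:
  fixes n :: nat
  assumes "n \<ge> 3"
  shows "(even n \<longrightarrow> storability n = 2) \<and>
         (odd n \<longrightarrow> storability n = 1 + 1 / cos (pi / real n) \<and> 1 + 1 / cos (pi / real n) > 2)"
proof -
  have C: "cos (pi / real n) \<ge> 1/2" "cos (pi / real n) < 1" using C_facts[OF assms] by auto
  have "1 < 1 / cos (pi / real n)" using C by (simp add: field_simps)
  then show ?thesis using even_case[OF assms] odd_case[OF assms] by auto
qed

end
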